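(* Let $E$ be a uniformly convex Banach space. For every $\varepsilon>0$ there is $\delta>0$ such that for all continuous isometric linear representations $\rho:\mathbb{R}\to\mathrm{O}(E)$, all $a\in\mathbb{R}$ and all $\xi\in E$: if $\|\rho(\gamma_a)\xi\|\ge(1-\delta)\|\xi\|$, then $\max_{|t|\le e^a}\|\rho(t)\xi-\xi\|\le\varepsilon\|\xi\|$.
   Context: $\gamma_a$ is the centered Gaussian probability measure on $\mathbb{R}$ with variance $e^{2a}$, and $\rho(\gamma_a)\xi=\int\rho(t)\xi\,d\gamma_a(t)$. $\mathrm{O}(E)$ is the group of linear isometries of $E$. Uniform convexity: for each $\varepsilon\in(0,2]$ there is $\delta>0$ with $\|(\xi+\eta)/2\|\le1-\delta$ for unit vectors with $\|\xi-\eta\|\ge\varepsilon$. *)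

theory Defs
  imports "HOL-Analysis.Analysis" "HOL-Probability.Distributions"
begin

definition uniformly_convex :: "'a::real_normed_vector itself \<Rightarrow> bool" where
  "uniformly_convex _ \<longleftrightarrow>
     (\<forall>\<epsilon>::real. 0 < \<epsilon> \<and> \<epsilon> \<le> 2 \<longrightarrow>
        (\<exists>\<delta>>0. \<forall>x y::'a. norm x = 1 \<and> norm y = 1 \<and> norm (x - y) \<ge> \<epsilon>
                   \<longrightarrow> norm ((x + y) /\<^sub>R 2) \<le> 1 - \<delta>))"

text \<open>A continuous isometric linear representation of the additive group of reals
  into the group O(E) of (bijective) linear isometries of E; continuity is
  continuity of each orbit map t \<mapsto> rho t xi (strong operator topology).\<close>
definition isometric_rep :: "(real \<Rightarrow> 'a::real_normed_vector \<Rightarrow> 'a) \<Rightarrow> bool" where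
  "isometric_rep \<rho> \<longleftrightarrow>
     (\<forall>t. bounded_linear (\<rho> t) \<and> bij (\<rho> t) \<and> (\<forall>x. norm (\<rho> t x) = norm x)) \<and>
     \<rho> 0 = id \<and>
     (\<forall>s t. \<rho> (s + t) = \<rho> s \<circ> \<rho> t) \<and>
     (\<forall>x. continuous_on UNIV (\<lambda>t. \<rho> t x))"

text \<open>rho(gamma_a) xi = integral of rho(t) xi against the centered Gaussian
  measure with variance e^(2a), i.e. standard deviation exp a.\<close>
definition gauss_avg :: "(real \<Rightarrow> 'a::real_normed_vector \<Rightarrow> 'a) \<Rightarrow> real \<Rightarrow> 'a \<Rightarrow> 'a" where
  "gauss_avg \<rho> a \<xi> = integral UNIV (\<lambda>t. normal_density 0 (exp a) t *\<^sub>R \<rho> t \<xi>)"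

end

theory Submission
  imports Defs
begin

lemma rep_facts:
  assumes "isometric_rep \<rho>"
  shows "bounded_linear (\<rho> t)" "norm (\<rho> t x) = norm x" "\<rho> (s + t) = \<rho> s \<circ> \<rho> t"
    "continuous_on S (\<lambda>t. \<rho> t x)"
  using assms unfolding isometric_rep_def by (auto intro: continuous_on_subset)

lemma dens_lower:
  fixes \<sigma> t :: real
  assumes "\<sigma> > 0" "\<bar>t\<bar> \<le> 2 * \<sigma>"
  shows "exp (-2) / (3 * \<sigma>) \<le> normal_density 0 \<sigma> t"
proof -
  have "sqrt (2 * pi * \<sigma>\<^sup>2) = sqrt (2*pi) * \<sigma>" using assms
    by (simp add: real_sqrt_mult)
  moreover have "sqrt (2*pi) \<le> 3"
  proof -
    have "2 * pi \<le> 3^2" using pi_less_4 by simp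
    then show ?thesis by (metis real_sqrt_le_iff real_sqrt_pow2_iff abs_of_nonneg real_sqrt_abs zero_le_numeral power2_eq_square
        real_sqrt_mult_self)
  qed
  moreover have "sqrt (2*pi) > 0" by simp
  ultimately have A: "1 / (3 * \<sigma>) \<le> 1 / sqrt (2 * pi * \<sigma>\<^sup>2)" using assms
    by (simp add: frac_le mult_right_mono)
  have "t\<^sup>2 \<le> (2*\<sigma>)\<^sup>2" using assms by (metis abs_le_square_iff abs_of_pos mult_pos_pos zero_less_numeral abs_mult abs_numeral)
  then have "t\<^sup>2 / (2 * \<sigma>\<^sup>2) \<le> 2" using assms by (simp add: field_simps power2_eq_square)
  then have B: "exp (-2) \<le> exp (-(t - 0)\<^sup>2/ (2 * \<sigma>\<^sup>2))" by simp
  have "exp (-2) / (3 * \<sigma>) = 1 / (3 * \<sigma>) * exp (-2)" by simp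
  also have "\<dots> \<le> 1 / sqrt (2 * pi * \<sigma>\<^sup>2) * exp (-(t - 0)\<^sup>2/ (2 * \<sigma>\<^sup>2))"
    using A B assms by (intro mult_mono) auto
  finally show ?thesis unfolding normal_density_def .
qed

lemma key:
  fixes \<rho> :: "real \<Rightarrow> 'a::banach \<Rightarrow> 'a" and \<sigma> s :: real
  assumes rep: "isometric_rep \<rho>" and sp: "\<sigma> > 0" and ss: "\<bar>s\<bar> \<le> \<sigma>"
    and int: "(\<lambda>t. normal_density 0 \<sigma> t *\<^sub>R \<rho> t \<xi>) integrable_on UNIV"
  shows "norm (integral UNIV (\<lambda>t. normal_density 0 \<sigma> t *\<^sub>R \<rho> t \<xi>))
     \<le> (1 - 2 * (exp (-2) / 6)) * norm \<xi> + (exp (-2) / 6) * norm (\<xi> + \<rho> s \<xi>)"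
proof -
  define c :: real where "c = exp (-2) / 6"
  define p where "p = normal_density 0 \<sigma>"
  define x where "x = (\<lambda>t. \<rho> t \<xi>)"
  define I1 :: "real set" where "I1 = {-\<sigma>..0}"
  define I2 :: "real set" where "I2 = {s-\<sigma>..s}"
  define r where "r = (\<lambda>t. (c/\<sigma>) * ((if t \<in> I1 then 1 else 0) + (if t \<in> I2 then 1 else 0)))"
  have cpos: "c > 0" unfolding c_def by simp
  have xc: "continuous_on S x" for S unfolding x_def by (rule rep_facts[OF rep])
  have xn: "norm (x t) = norm \<xi>" for t unfolding x_def by (rule rep_facts[OF rep])
  have rp: "r t \<le> p t" for t
  proof (cases "t \<in> I1 \<or> t \<in> I2")
    case True
    then have "\<bar>t\<bar> \<le> 2 * \<sigma>" using ss sp unfolding I1_def I2_def by auto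
    then have "exp (-2) / (3 * \<sigma>) \<le> p t" unfolding p_def by (rule dens_lower[OF sp])
    moreover have "r t \<le> 2 * c / \<sigma>" unfolding r_def using cpos sp
      by (auto simp: field_simps)
    moreover have "2 * c / \<sigma> = exp (-2) / (3 * \<sigma>)" unfolding c_def by simp
    ultimately show ?thesis by linarith
  next
    case False
    then show ?thesis unfolding r_def p_def by simp
  qed
  have pint: "p integrable_on UNIV" unfolding p_def by (rule integrable_on_lborel) (simp add: integrable_normal_density[OF sp])
  have p1: "integral UNIV p = 1" unfolding p_def by (subst integral_lborel) (simp_all add: integrable_normal_density[OF sp] integral_normal_density[OF sp])
  have ind: "(\<lambda>t. if t \<in> {a..b} then (1::real) else 0) integrable_on UNIV"
            "integral UNIV (\<lambda>t. if t \<in> {a..b} then (1::real) else 0) = b - a" if "a \<le> b" for a b :: real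
  proof -
    show "(\<lambda>t. if t \<in> {a..b} then (1::real) else 0) integrable_on UNIV"
      using integrable_restrict_UNIV[of "{a..b}" "\<lambda>_. 1::real"] by (simp add: integrable_const_ivl del: atLeastAtMost_iff)
    show "integral UNIV (\<lambda>t. if t \<in> {a..b} then (1::real) else 0) = b - a"
      using integral_restrict_UNIV[of "{a..b}" "\<lambda>_. 1::real"] that by (simp add: integrable_const_ivl del: atLeastAtMost_iff)
  qed
  have rint: "r integrable_on UNIV" unfolding r_def I1_def I2_def using sp
    by (intro integrable_on_mult_right integrable_add ind) auto
  have r2: "integral UNIV r = 2 * c" unfolding r_def I1_def I2_def using sp
    using sp ind(1)[of "-\<sigma>" 0] ind(1)[of "s-\<sigma>" s] ind(2)[of "-\<sigma>" 0] ind(2)[of "s-\<sigma>" s]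
    by (simp only: integral_mult_right integral_add) simp
  have xI: "x integrable_on {a..b}" for a b by (rule integrable_continuous_real[OF xc])
  have xR: "(\<lambda>t. if t \<in> {a..b} then x t else 0) integrable_on UNIV" for a b :: real
    using integrable_restrict_UNIV[of "{a..b}" x] xI by (simp del: atLeastAtMost_iff)
  have xRi: "integral UNIV (\<lambda>t. if t \<in> {a..b} then x t else 0) = integral {a..b} x" for a b :: real
    using integral_restrict_UNIV[of "{a..b}" x] by (simp del: atLeastAtMost_iff)
  have rx_eq: "(\<lambda>t. r t *\<^sub>R x t) = (\<lambda>t. (c/\<sigma>) *\<^sub>R ((if t \<in> I1 then x t else 0) + (if t \<in> I2 then x t else 0)))"
    unfolding r_def by (auto simp: fun_eq_iff scaleR_add_right scaleR_add_left[symmetric])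
  have rxint: "(\<lambda>t. r t *\<^sub>R x t) integrable_on UNIV"
    unfolding rx_eq I1_def I2_def
    by (intro integrable_cmul integrable_add xR)
  have rxI: "integral UNIV (\<lambda>t. r t *\<^sub>R x t) = (c/\<sigma>) *\<^sub>R (integral I1 x + integral I2 x)"
    unfolding rx_eq I1_def I2_def
    by (simp only: integral_cmul integral_add xR xRi)
  have "integral I2 x = integral {-\<sigma>..0} (x \<circ> (+) s)"
    unfolding I2_def using integral_shift_Icc_real[of "-\<sigma>" 0 x s] by (simp add: add.commute)
  also have "x \<circ> (+) s = (\<lambda>t. \<rho> t (\<rho> s \<xi>))" unfolding x_def
    using rep_facts(3)[OF rep, of _ s] by (auto simp: fun_eq_iff add.commute)
  finally have "integral I1 x + integral I2 x = integral {-\<sigma>..0} (\<lambda>t. \<rho> t \<xi> + \<rho> t (\<rho> s \<xi>))"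
    unfolding I1_def x_def
    by (subst integral_add) (auto intro!: integrable_continuous_real continuous_on_subset[OF rep_facts(4)[OF rep]])
  also have "\<dots> = integral {-\<sigma>..0} (\<lambda>t. \<rho> t (\<xi> + \<rho> s \<xi>))"
    using linear_add[OF bounded_linear.linear[OF rep_facts(1)[OF rep]]] by simp
  finally have sumI: "integral I1 x + integral I2 x = integral {-\<sigma>..0} (\<lambda>t. \<rho> t (\<xi> + \<rho> s \<xi>))" .
  have "norm (integral {-\<sigma>..0} (\<lambda>t. \<rho> t (\<xi> + \<rho> s \<xi>))) \<le> norm (\<xi> + \<rho> s \<xi>) * Henstock_Kurzweil_Integration.content {-\<sigma>..0}"
    by (rule has_integral_bound_real[where S="{}"])
      (auto intro!: integrable_integral integrable_continuous_real rep_facts(4)[OF rep] simp: rep_facts(2)[OF rep])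
  then have "norm (integral {-\<sigma>..0} (\<lambda>t. \<rho> t (\<xi> + \<rho> s \<xi>))) \<le> norm (\<xi> + \<rho> s \<xi>) * \<sigma>"
    using sp by simp
  then have bound2: "norm (integral UNIV (\<lambda>t. r t *\<^sub>R x t)) \<le> c * norm (\<xi> + \<rho> s \<xi>)"
    unfolding rxI sumI using sp cpos by (simp add: field_simps)
  have pxint: "(\<lambda>t. p t *\<^sub>R x t) integrable_on UNIV" using int unfolding p_def x_def .
  have dint: "(\<lambda>t. (p t - r t) *\<^sub>R x t) integrable_on UNIV"
    using integrable_diff[OF pxint rxint] by (simp add: scaleR_diff_left)
  have gint: "(\<lambda>t. (p t - r t) * norm \<xi>) integrable_on UNIV"
    by (intro integrable_on_mult_left integrable_diff pint rint)
  have bound1: "norm (integral UNIV (\<lambda>t. (p t - r t) *\<^sub>R x t)) \<le> integral UNIV (\<lambda>t. (p t - r t) * norm \<xi>)"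
    by (rule integral_norm_bound_integral[OF dint gint]) (simp add: xn rp)
  have "integral UNIV (\<lambda>t. (p t - r t) * norm \<xi>) = (1 - 2 * c) * norm \<xi>"
    by (simp add: integral_mult_left integral_diff pint rint p1 r2)
  moreover have "integral UNIV (\<lambda>t. p t *\<^sub>R x t) = integral UNIV (\<lambda>t. (p t - r t) *\<^sub>R x t) + integral UNIV (\<lambda>t. r t *\<^sub>R x t)"
    by (subst integral_add[symmetric]) (auto intro: dint rxint integrable_diff pxint simp: scaleR_diff_left)
  ultimately have "norm (integral UNIV (\<lambda>t. p t *\<^sub>R x t)) \<le> (1 - 2 * c) * norm \<xi> + c * norm (\<xi> + \<rho> s \<xi>)"
  proof -
    assume e1: "integral UNIV (\<lambda>t. (p t - r t) * norm \<xi>) = (1 - 2 * c) * norm \<xi>"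
      and e2: "integral UNIV (\<lambda>t. p t *\<^sub>R x t) = integral UNIV (\<lambda>t. (p t - r t) *\<^sub>R x t) + integral UNIV (\<lambda>t. r t *\<^sub>R x t)"
    have "norm (integral UNIV (\<lambda>t. p t *\<^sub>R x t)) \<le> norm (integral UNIV (\<lambda>t. (p t - r t) *\<^sub>R x t)) + norm (integral UNIV (\<lambda>t. r t *\<^sub>R x t))"
      unfolding e2 by (rule norm_triangle_ineq)
    then show ?thesis using bound1 bound2 unfolding e1 by linarith
  qed
  then show ?thesis unfolding p_def x_def c_def .
qed


theorem proposition3p3:
  assumes "uniformly_convex TYPE('a::banach)"
  shows "\<forall>\<epsilon>>0. \<exists>\<delta>>0. \<forall>(\<rho>::real \<Rightarrow> 'a \<Rightarrow> 'a) (a::real) (\<xi>::'a).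
           isometric_rep \<rho> \<longrightarrow> norm (gauss_avg \<rho> a \<xi>) \<ge> (1 - \<delta>) * norm \<xi> \<longrightarrow>
           (\<forall>t. \<bar>t\<bar> \<le> exp a \<longrightarrow> norm (\<rho> t \<xi> - \<xi>) \<le> \<epsilon> * norm \<xi>)"
proof (intro allI impI)
  fix \<epsilon> :: real assume ep: "\<epsilon> > 0"
  define e' where "e' = min \<epsilon> 2"
  have e2: "0 < e' \<and> e' \<le> 2" unfolding e'_def using ep by auto
  have "\<exists>d>0. \<forall>x y::'a. norm x = 1 \<and> norm y = 1 \<and> norm (x - y) \<ge> e'
                   \<longrightarrow> norm ((x + y) /\<^sub>R 2) \<le> 1 - d"
    by (rule mp[OF spec[OF assms[unfolded uniformly_convex_def], of e'] e2])
  then obtain d where dpos: "d > 0" and dUC0: "\<forall>x y::'a. norm x = 1 \<and> norm y = 1 \<and> norm (x - y) \<ge> e'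
                   \<longrightarrow> norm ((x + y) /\<^sub>R 2) \<le> 1 - d"
    by blast
  have dUC: "norm ((x + y) /\<^sub>R 2) \<le> 1 - d" if "norm x = 1" "norm y = 1" "norm (x - y) \<ge> e'" for x y :: 'a
    using dUC0 that by blast
  define c :: real where "c = exp (-2) / 6"
  have cpos: "c > 0" unfolding c_def by simp
  define \<delta> where "\<delta> = min (c * d) (1/2)"
  have dl: "\<delta> > 0" unfolding \<delta>_def using cpos dpos by simp
  show "\<exists>\<delta>>0. \<forall>(\<rho>::real \<Rightarrow> 'a \<Rightarrow> 'a) (a::real) (\<xi>::'a).
           isometric_rep \<rho> \<longrightarrow> norm (gauss_avg \<rho> a \<xi>) \<ge> (1 - \<delta>) * norm \<xi> \<longrightarrow>
           (\<forall>t. \<bar>t\<bar> \<le> exp a \<longrightarrow> norm (\<rho> t \<xi> - \<xi>) \<le> \<epsilon> * norm \<xi>)"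
  proof (rule exI[of _ \<delta>], intro conjI allI impI dl)
    fix \<rho> :: "real \<Rightarrow> 'a \<Rightarrow> 'a" and a :: real and \<xi> :: 'a and t :: real
    assume rep: "isometric_rep \<rho>" and H: "norm (gauss_avg \<rho> a \<xi>) \<ge> (1 - \<delta>) * norm \<xi>"
      and tb: "\<bar>t\<bar> \<le> exp a"
    show "norm (\<rho> t \<xi> - \<xi>) \<le> \<epsilon> * norm \<xi>"
    proof (rule ccontr)
      assume C: "\<not> ?thesis"
      have xi0: "\<xi> \<noteq> 0"
      proof
        assume "\<xi> = 0"
        then have "\<rho> t \<xi> = 0" using rep_facts(2)[OF rep, of t \<xi>] by simp
        with C \<open>\<xi> = 0\<close> show False by simp
      qed
      define n where "n = norm \<xi>"
      have npos: "n > 0" unfolding n_def using xi0 by simp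
      have hd: "\<delta> \<le> c * d" "\<delta> \<le> 1/2" unfolding \<delta>_def by auto
      show False
      proof (cases "(\<lambda>t. normal_density 0 (exp a) t *\<^sub>R \<rho> t \<xi>) integrable_on UNIV")
        case False
        then have "gauss_avg \<rho> a \<xi> = 0" unfolding gauss_avg_def by (rule not_integrable_integral)
        with H have "(1 - \<delta>) * n \<le> 0" unfolding n_def by simp
        moreover have "(1 - \<delta>) * n > 0" using hd npos by simp
        ultimately show False by linarith
      next
        case True
        have K: "norm (gauss_avg \<rho> a \<xi>) \<le> (1 - 2 * c) * n + c * norm (\<xi> + \<rho> t \<xi>)"
          unfolding gauss_avg_def c_def n_def using key[OF rep _ tb True] by simp
        define X where "X = (1/n) *\<^sub>R \<xi>"
        define Y where "Y = (1/n) *\<^sub>R \<rho> t \<xi>"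
        have nX: "norm X = 1" unfolding X_def n_def using xi0 by simp
        have nY: "norm Y = 1" unfolding Y_def n_def using xi0 rep_facts(2)[OF rep] by simp
        have "X - Y = (1/n) *\<^sub>R (\<xi> - \<rho> t \<xi>)" unfolding X_def Y_def by (simp add: scaleR_diff_right)
        then have "norm (X - Y) = norm (\<rho> t \<xi> - \<xi>) / n" using npos by (simp add: norm_minus_commute)
        moreover have "norm (\<rho> t \<xi> - \<xi>) > \<epsilon> * n" using C unfolding n_def by simp
        ultimately have "\<epsilon> * n < norm (X - Y) * n" using npos by (simp add: field_simps)
        then have "norm (X - Y) > \<epsilon>" using npos by (simp add: mult_less_cancel_right_pos)
        then have "norm (X - Y) \<ge> e'" unfolding e'_def by simp
        then have UC: "norm ((X + Y) /\<^sub>R 2) \<le> 1 - d" by (rule dUC[OF nX nY])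
        have "(X + Y) /\<^sub>R 2 = (1/(2*n)) *\<^sub>R (\<xi> + \<rho> t \<xi>)" unfolding X_def Y_def
          by (simp add: scaleR_add_right)
        then have "norm ((X + Y) /\<^sub>R 2) = norm (\<xi> + \<rho> t \<xi>) / (2 * n)" using npos by simp
        then have "norm (\<xi> + \<rho> t \<xi>) = (2 * n) * norm ((X + Y) /\<^sub>R 2)" using npos by simp
        also have "\<dots> \<le> (2 * n) * (1 - d)" using UC npos by (intro mult_left_mono) auto
        finally have "norm (\<xi> + \<rho> t \<xi>) \<le> 2 * (1 - d) * n" by (simp add: algebra_simps)
        then have "c * norm (\<xi> + \<rho> t \<xi>) \<le> c * (2 * (1 - d) * n)" using cpos by simp
        with K H have "(1 - \<delta>) * n \<le> (1 - 2 * c) * n + c * (2 * (1 - d) * n)" unfolding n_def by linarith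
        then have "(1 - \<delta>) * n \<le> (1 - 2 * c * d) * n" by (simp add: algebra_simps)
        then have "1 - \<delta> \<le> 1 - 2 * c * d" using npos by simp
        moreover have "c * d > 0" using cpos dpos by simp
        ultimately show False using hd by linarith
      qed
    qed
  qed
qed

end
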